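(* Let $\Omega\subset\mathbb{R}^n$, $n\ge2$, be a bounded $C^{2,\alpha}$ domain with $0\in\partial\Omega$. Let $a_1(s,p),a_2(s,p)$ be defined on $\mathcal R\times B_{r_0}(0)$ and satisfy (H1)--(H3) below, with $r_0$ small enough that, for all $s\in\mathbb{R}$ and $p\in\mathbb{C}^n$ with $p\cdot p=0$, $|p|<r_0$, and every $h\in C^{2,\alpha}(\overline\Omega)$, the linear problem $$\operatorname{div}_x\Big[a(u_{s,p},p)\nabla v+p\big\{\nabla_pa(u_{s,p},p)\cdot\nabla v+\partial_sa(u_{s,p},p)v\big\}\Big]=0\ \text{in }\Omega,\qquad v|_{\partial\Omega}=h$$ (for $a=a_1,a_2$) has a unique solution $v\in C^{2,\alpha}(\overline\Omega)$. Assume the corresponding linearized DN maps coincide: $\widetilde\Gamma_{\ell,a_1,s,p}[h]=\widetilde\Gamma_{\ell,a_2,s,p}[h]$ in $C^{1,\alpha}(\partial\Omega)$ for all $h\in C^{2,\alpha}(\overline\Omega)$ and all such $(s,p)$. Then $a_1\equiv a_2$ in $\mathcal R\times\mathcal C(r_0)$.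
   Context: $u_{s,p}(x)=s+x\cdot p$, $x\cdot p=\sum_jx_jp_j$. $\mathcal R=\mathbb{R}+i[-R_0,R_0]$, $B_r(0)=\{p\in\mathbb{C}^n:|p|<r\}$, $\nu$ outer unit normal, and $\mathcal C(r_0)=\{p\in\mathbb{C}^n:|p|<r_0,\ p\cdot p=0,\ p\cdot\nu(0)\ne0\}$. (H1) $a=a(s,p)>0$ for real $(s,p)$. (H2) there are $r_0,R_0>0$ such that $a$ extends analytically to $\mathcal R\times B_{r_0}(0)$, real for real arguments. (H3) there exist $\tilde\lambda>0$, $\Lambda$, continuous $\lambda(s,p)$ with $0<\tilde\lambda\le\lambda(s,p)\le\operatorname{Re}a(s,p)$ and $|a|+|\nabla_pa|\le\Lambda$ on $\mathcal R\times B_{r_0}(0)$. Linearized DN map: $\widetilde\Gamma_{\ell,a,s,p}[h]=\big[a(u_{s,p},p)\nabla v+p\{\nabla_pa(u_{s,p},p)\cdot\nabla v+\partial_sa(u_{s,p},p)v\}\big]\cdot\nu|_{\partial\Omega}$ with $v$ the solution of the linear problem above. *)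

theory Defs
  imports "HOL-Analysis.Analysis"
begin

definition pd :: "((real^'n) \<Rightarrow> 'b::real_normed_vector) \<Rightarrow> 'n \<Rightarrow> real^'n \<Rightarrow> 'b" where
  "pd f j x = vector_derivative (\<lambda>t::real. f (x + t *\<^sub>R axis j 1)) (at 0)"

definition has_pd :: "((real^'n) \<Rightarrow> 'b::real_normed_vector) \<Rightarrow> 'n \<Rightarrow> real^'n \<Rightarrow> bool" where
  "has_pd f j x \<longleftrightarrow> (\<lambda>t::real. f (x + t *\<^sub>R axis j 1)) differentiable (at 0)"

definition holder_on :: "real \<Rightarrow> (real^'n) set \<Rightarrow> ((real^'n) \<Rightarrow> 'b::real_normed_vector) \<Rightarrow> bool" where
  "holder_on \<alpha> S g \<longleftrightarrow> (\<exists>C. \<forall>x\<in>S. \<forall>y\<in>S. norm (g x - g y) \<le> C * dist x y powr \<alpha>)"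

text \<open>Membership in C^{2,alpha}(closure S): continuous on the closure, C^2 in S,
  first derivatives extend continuously to the closure (uniform continuity on S),
  second derivatives uniformly alpha-Hoelder on S.\<close>
definition C2a :: "(real^'n) set \<Rightarrow> real \<Rightarrow> ((real^'n) \<Rightarrow> 'b::real_normed_vector) \<Rightarrow> bool" where
  "C2a S \<alpha> v \<longleftrightarrow>
     continuous_on (closure S) v \<and>
     (\<forall>x\<in>S. \<forall>j. has_pd v j x) \<and>
     (\<forall>x\<in>S. \<forall>i j. has_pd (pd v j) i x) \<and>
     (\<forall>j. uniformly_continuous_on S (pd v j)) \<and>
     (\<forall>i j. holder_on \<alpha> S (pd (pd v j) i))"

definition grad_r :: "((real^'n) \<Rightarrow> real) \<Rightarrow> real^'n \<Rightarrow> real^'n" where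
  "grad_r \<rho> x = (\<chi> j. pd \<rho> j x)"

definition local_defn :: "(real^'n) set \<Rightarrow> real \<Rightarrow> real^'n \<Rightarrow> real \<Rightarrow> ((real^'n) \<Rightarrow> real) \<Rightarrow> bool" where
  "local_defn \<Omega> \<alpha> x0 r \<rho> \<longleftrightarrow> 0 < r \<and> C2a (ball x0 r) \<alpha> \<rho> \<and>
     (\<forall>x\<in>ball x0 r. grad_r \<rho> x \<noteq> 0) \<and>
     \<Omega> \<inter> ball x0 r = {x \<in> ball x0 r. \<rho> x < 0}"

definition C2a_domain :: "(real^'n) set \<Rightarrow> real \<Rightarrow> bool" where
  "C2a_domain \<Omega> \<alpha> \<longleftrightarrow> open \<Omega> \<and> connected \<Omega> \<and> bounded \<Omega> \<and> \<Omega> \<noteq> {} \<and>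
     (\<forall>x0\<in>frontier \<Omega>. \<exists>r \<rho>. local_defn \<Omega> \<alpha> x0 r \<rho>)"

definition outer_normal :: "(real^'n) set \<Rightarrow> real \<Rightarrow> real^'n \<Rightarrow> real^'n" where
  "outer_normal \<Omega> \<alpha> x = (SOME \<nu>. \<exists>r \<rho>. local_defn \<Omega> \<alpha> x r \<rho> \<and>
       \<nu> = (1 / norm (grad_r \<rho> x)) *\<^sub>R grad_r \<rho> x)"

definition cscale :: "complex \<Rightarrow> complex \<times> (complex^'n) \<Rightarrow> complex \<times> (complex^'n)" where
  "cscale c z = (c * fst z, c *s snd z)"

text \<open>Holomorphic (= complex analytic) on an open set: complex Frechet differentiable.\<close>
definition cholo_on :: "(complex \<times> (complex^'n)) set \<Rightarrow> (complex \<times> (complex^'n) \<Rightarrow> complex) \<Rightarrow> bool" where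
  "cholo_on U f \<longleftrightarrow> open U \<and>
     (\<forall>z\<in>U. \<exists>L. (f has_derivative L) (at z) \<and> (\<forall>c w. L (cscale c w) = c * L w))"

definition strip :: "real \<Rightarrow> complex set" where
  "strip R0 = {z. \<bar>Im z\<bar> \<le> R0}"

definition vreal :: "real^'n \<Rightarrow> complex^'n" where
  "vreal p = (\<chi> j. complex_of_real (p $ j))"

definition bdot :: "complex^'n \<Rightarrow> complex^'n \<Rightarrow> complex" where
  "bdot p q = (\<Sum>j\<in>UNIV. p $ j * q $ j)"

definition ds :: "(complex \<Rightarrow> complex^'n \<Rightarrow> complex) \<Rightarrow> complex \<Rightarrow> complex^'n \<Rightarrow> complex" where
  "ds a s p = deriv (\<lambda>w. a w p) s"

definition gradp :: "(complex \<Rightarrow> complex^'n \<Rightarrow> complex) \<Rightarrow> complex \<Rightarrow> complex^'n \<Rightarrow> complex^'n" where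
  "gradp a s p = (\<chi> j. deriv (\<lambda>w. a s (\<chi> k. if k = j then w else p $ k)) (p $ j))"

definition u_sp :: "complex \<Rightarrow> complex^'n \<Rightarrow> real^'n \<Rightarrow> complex" where
  "u_sp s p x = s + bdot (vreal x) p"

definition gradc :: "((real^'n) \<Rightarrow> complex) \<Rightarrow> real^'n \<Rightarrow> complex^'n" where
  "gradc v x = (\<chi> j. pd v j x)"

text \<open>Flux vector field a(u,p) grad v + p { grad_p a(u,p) . grad v + d_s a(u,p) v },
  with the gradient g of v given separately (interior vs boundary values).\<close>
definition flux :: "(complex \<Rightarrow> complex^'n \<Rightarrow> complex) \<Rightarrow> complex \<Rightarrow> complex^'n \<Rightarrow> real^'n
                    \<Rightarrow> complex \<Rightarrow> complex^'n \<Rightarrow> complex^'n" where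
  "flux a s p x vx g = a (u_sp s p x) p *s g
      + (bdot (gradp a (u_sp s p x) p) g + ds a (u_sp s p x) p * vx) *s p"

definition div_zero :: "(real^'n \<Rightarrow> complex^'n) \<Rightarrow> real^'n \<Rightarrow> bool" where
  "div_zero F x \<longleftrightarrow> (\<forall>j. has_pd (\<lambda>y. F y $ j) j x) \<and> (\<Sum>j\<in>UNIV. pd (\<lambda>y. F y $ j) j x) = 0"

definition solves :: "(real^'n) set \<Rightarrow> real \<Rightarrow> (complex \<Rightarrow> complex^'n \<Rightarrow> complex) \<Rightarrow> complex \<Rightarrow> complex^'n
                      \<Rightarrow> (real^'n \<Rightarrow> complex) \<Rightarrow> (real^'n \<Rightarrow> complex) \<Rightarrow> bool" where
  "solves \<Omega> \<alpha> a s p h v \<longleftrightarrow> C2a \<Omega> \<alpha> v \<and>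
     (\<forall>x\<in>\<Omega>. div_zero (\<lambda>y. flux a s p y (v y) (gradc v y)) x) \<and>
     (\<forall>x\<in>frontier \<Omega>. v x = h x)"

definition gradb :: "(real^'n) set \<Rightarrow> ((real^'n) \<Rightarrow> complex) \<Rightarrow> real^'n \<Rightarrow> complex^'n" where
  "gradb \<Omega> v x = (\<chi> j. Lim (at x within \<Omega>) (pd v j))"

definition lin_DN :: "(real^'n) set \<Rightarrow> real \<Rightarrow> (complex \<Rightarrow> complex^'n \<Rightarrow> complex) \<Rightarrow> complex \<Rightarrow> complex^'n
                      \<Rightarrow> (real^'n \<Rightarrow> complex) \<Rightarrow> real^'n \<Rightarrow> complex" where
  "lin_DN \<Omega> \<alpha> a s p v x = bdot (flux a s p x (v x) (gradb \<Omega> v x)) (vreal (outer_normal \<Omega> \<alpha> x))"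

definition cone :: "(real^'n) set \<Rightarrow> real \<Rightarrow> real \<Rightarrow> (complex^'n) set" where
  "cone \<Omega> \<alpha> r0 = {p. norm p < r0 \<and> bdot p p = 0 \<and> bdot p (vreal (outer_normal \<Omega> \<alpha> 0)) \<noteq> 0}"

definition H123 :: "real \<Rightarrow> real \<Rightarrow> (complex \<Rightarrow> complex^'n \<Rightarrow> complex) \<Rightarrow> bool" where
  "H123 r0 R0 a \<longleftrightarrow>
     \<comment> \<open>(H1) and reality for real arguments\<close>
     (\<forall>(s::real) (p::real^'n). norm p < r0 \<longrightarrow>
         a (complex_of_real s) (vreal p) \<in> \<real> \<and> 0 < Re (a (complex_of_real s) (vreal p))) \<and>
     \<comment> \<open>(H2) analytic on a neighbourhood of R x B_r0(0)\<close>
     (\<exists>U. strip R0 \<times> ball 0 r0 \<subseteq> U \<and> cholo_on U (\<lambda>z. a (fst z) (snd z))) \<and>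
     \<comment> \<open>(H3)\<close>
     (\<exists>lt \<Lambda> (lam :: complex \<Rightarrow> complex^'n \<Rightarrow> real). 0 < lt \<and>
         continuous_on (strip R0 \<times> ball 0 r0) (\<lambda>z. lam (fst z) (snd z)) \<and>
         (\<forall>s\<in>strip R0. \<forall>p\<in>ball 0 r0.
            lt \<le> lam s p \<and> lam s p \<le> Re (a s p) \<and>
            cmod (a s p) + norm (gradp a s p) \<le> \<Lambda>))"

end

theory Submission
  imports Defs "HOL-Complex_Analysis.Complex_Analysis"
begin

lemma cauchy_deriv_cont:
  fixes \<Phi> :: "complex \<Rightarrow> 'a::topological_space \<Rightarrow> complex"
  assumes cont: "continuous_on (cball w0 R \<times> S) (\<lambda>z. \<Phi> (fst z) (snd z))"
    and hol: "\<And>w z. w \<in> ball w0 R \<Longrightarrow> z \<in> S \<Longrightarrow> (\<lambda>w. \<Phi> w z) field_differentiable at w"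
    and r: "0 < r" "r < R"
  shows "continuous_on (ball w0 r \<times> S) (\<lambda>x. deriv (\<lambda>w. \<Phi> w (snd x)) (fst x))"
proof -
  define E where "E = (\<lambda>t::real. exp (2 * of_real pi * \<i> * of_real t))"
  define F where "F = (\<lambda>(x::complex\<times>'a) (t::real). \<Phi> (w0 + R * E t) (snd x) / (w0 + R * E t - fst x)^2
                       * (2 * pi * \<i> * R * E t))"
  have normE: "norm (E t) = 1" for t unfolding E_def by (simp add: norm_exp_eq_Re)
  have eq: "deriv (\<lambda>w. \<Phi> w (snd x)) (fst x) = 1 / (complex_of_real (2 * pi) * \<i>) * integral (cbox 0 1) (F x)"
    if x: "x \<in> ball w0 r \<times> S" for x
  proof -
    have c1: "continuous_on (cball w0 R) (\<lambda>u. \<Phi> u (snd x))"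
      by (rule continuous_on_compose2[OF cont, of _ "\<lambda>u. (u, snd x)", simplified])
         (use x in \<open>auto intro!: continuous_intros\<close>)
    have h1: "(\<lambda>u. \<Phi> u (snd x)) holomorphic_on ball w0 R"
      using hol x by (auto simp: holomorphic_on_def field_differentiable_at_within)
    have w: "fst x \<in> ball w0 R" using x r by auto
    from Cauchy_higher_derivative_integral_circlepath(2)[OF c1 h1 w, of 1]
    have "deriv (\<lambda>w. \<Phi> w (snd x)) (fst x) = 1 / (complex_of_real (2 * pi) * \<i>) *
        contour_integral (circlepath w0 R) (\<lambda>u. \<Phi> u (snd x) / (u - fst x) ^ 2)"
      by (simp add: numeral_2_eq_2)
    also have "contour_integral (circlepath w0 R) (\<lambda>u. \<Phi> u (snd x) / (u - fst x) ^ 2) = integral (cbox 0 1) (F x)"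
      unfolding contour_integral_integral vector_derivative_circlepath box_real
      by (simp add: F_def E_def circlepath case_prod_beta)
    finally show ?thesis .
  qed
  have "continuous_on (ball w0 r \<times> S) (\<lambda>x. integral (cbox 0 1) (F x))"
  proof (rule integral_continuous_on_param)
    have nz: "w0 + R * E t - fst x \<noteq> 0" if "x \<in> ball w0 r \<times> S" for x t
    proof
      assume "w0 + R * E t - fst x = 0"
      then have "fst x - w0 = R * E t" by (simp add: algebra_simps)
      then have "norm (fst x - w0) = R" using normE r by (simp add: norm_mult)
      moreover have "norm (fst x - w0) < r" using that by (auto simp: dist_norm norm_minus_commute)
      ultimately show False using r by simp
    qed
    have cE: "continuous_on A (\<lambda>z. E (g z))" if "continuous_on A g" for A and g :: "_ \<Rightarrow> real"
      unfolding E_def by (intro continuous_intros that)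
    have cPhi: "continuous_on ((ball w0 r \<times> S) \<times> cbox 0 1) (\<lambda>(x, t). \<Phi> (w0 + R * E t) (snd x))"
    proof -
      have "continuous_on ((ball w0 r \<times> S) \<times> cbox 0 1) (\<lambda>y. (\<lambda>z. \<Phi> (fst z) (snd z)) ((\<lambda>(x,t). (w0 + R * E t, snd x)) y))"
      proof (rule continuous_on_compose2[OF cont])
        show "continuous_on ((ball w0 r \<times> S) \<times> cbox 0 1) (\<lambda>(x, t). (w0 + of_real R * E t, snd x))"
          unfolding case_prod_beta by (intro continuous_intros cE)
        show "(\<lambda>(x, t). (w0 + complex_of_real R * E t, snd x)) ` ((ball w0 r \<times> S) \<times> cbox 0 1) \<subseteq> cball w0 R \<times> S"
          using normE r by (auto simp: dist_norm norm_mult)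
      qed
      then show ?thesis by (simp add: case_prod_beta)
    qed
    show "continuous_on ((ball w0 r \<times> S) \<times> cbox 0 1) (\<lambda>(x, t). F x t)"
      unfolding F_def case_prod_beta
      apply (intro continuous_intros cE)
      using cPhi apply (simp add: case_prod_beta)
      using nz by auto
  qed
  then have "continuous_on (ball w0 r \<times> S) (\<lambda>x. 1 / (complex_of_real (2 * pi) * \<i>) * integral (cbox 0 1) (F x))"
    by (intro continuous_intros)
  then show ?thesis
    by (rule continuous_on_eq) (use eq in auto)
qed

lemma mixed_deriv:
  fixes \<Phi> :: "complex \<Rightarrow> complex \<Rightarrow> complex"
  assumes V: "open V" and cont: "continuous_on V (\<lambda>z. \<Phi> (fst z) (snd z))"
    and h1: "\<And>w z. (w,z) \<in> V \<Longrightarrow> (\<lambda>w. \<Phi> w z) field_differentiable at w"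
    and h2: "\<And>w z. (w,z) \<in> V \<Longrightarrow> \<Phi> w field_differentiable at z"
    and inV: "(w0,z0) \<in> V"
  shows "(\<lambda>w. deriv (\<Phi> w) z0) field_differentiable at w0"
proof -
  obtain e where e: "e>0" "ball (w0,z0) e \<subseteq> V" using V inV open_contains_ball by blast
  define r where "r = e/4"
  have r: "r > 0" using e by (simp add: r_def)
  have sub: "(w,z) \<in> V" if "dist w0 w \<le> 2*r" "dist z0 z \<le> 2*r" for w z
  proof -
    have "(dist w0 w)\<^sup>2 + (dist z0 z)\<^sup>2 \<le> (2*r)\<^sup>2 + (2*r)\<^sup>2"
      using that by (intro add_mono power_mono) auto
    also have "\<dots> < e\<^sup>2" using r by (simp add: r_def power2_eq_square field_simps)
    finally have "sqrt ((dist w0 w)\<^sup>2 + (dist z0 z)\<^sup>2) < e"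
      using e(1) by (simp add: real_sqrt_less_iff real_less_lsqrt real_sqrt_less_mono)
    then show ?thesis using e(2) by (auto simp: dist_Pair_Pair)
  qed
  have cont2: "continuous_on (cball w0 (2*r) \<times> cball z0 (2*r)) (\<lambda>z. \<Phi> (fst z) (snd z))"
    by (rule continuous_on_subset[OF cont]) (use sub in auto)
  have Dc: "continuous_on (ball w0 r \<times> cball z0 (2*r)) (\<lambda>x. deriv (\<lambda>w. \<Phi> w (snd x)) (fst x))"
    by (rule cauchy_deriv_cont[OF cont2]) (use h1 sub r in auto)
  define E where "E = (\<lambda>t::real. exp (2 * of_real pi * \<i> * of_real t))"
  have normE: "norm (E t) = 1" for t unfolding E_def by (simp add: norm_exp_eq_Re)
  have cE: "continuous_on A (\<lambda>z. E (g z))" if "continuous_on A g" for A and g :: "'b::topological_space \<Rightarrow> real"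
    unfolding E_def by (intro continuous_intros that)
  define G where "G = (\<lambda>w t. \<Phi> w (z0 + r * E t) / (z0 + r * E t - z0)^2 * (2 * pi * \<i> * r * E t))"
  define Gx where "Gx = (\<lambda>w t. deriv (\<lambda>w. \<Phi> w (z0 + r * E t)) w / (z0 + r * E t - z0)^2 * (2 * pi * \<i> * r * E t))"
  have eq: "deriv (\<Phi> w) z0 = 1 / (complex_of_real (2 * pi) * \<i>) * integral (cbox 0 1) (G w)"
    if w: "w \<in> ball w0 r" for w
  proof -
    have c1: "continuous_on (cball z0 r) (\<Phi> w)"
      by (rule continuous_on_compose2[OF cont, of _ "\<lambda>u. (w, u)", simplified])
         (use w sub r in \<open>auto intro!: continuous_intros sub\<close>)
    have hh: "\<Phi> w holomorphic_on ball z0 r"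
    proof -
      have "\<Phi> w field_differentiable at x" if "x \<in> ball z0 r" for x
        using w r that by (auto intro!: h2 sub simp: dist_commute)
      then show ?thesis by (meson field_differentiable_at_within holomorphic_on_def)
    qed
    from Cauchy_higher_derivative_integral_circlepath(2)[OF c1 hh, of z0 1]
    have "deriv (\<Phi> w) z0 = 1 / (complex_of_real (2 * pi) * \<i>) *
        contour_integral (circlepath z0 r) (\<lambda>u. \<Phi> w u / (u - z0) ^ 2)"
      using r by (simp add: numeral_2_eq_2)
    also have "contour_integral (circlepath z0 r) (\<lambda>u. \<Phi> w u / (u - z0) ^ 2) = integral (cbox 0 1) (G w)"
      unfolding contour_integral_integral vector_derivative_circlepath box_real
      by (simp add: G_def E_def circlepath)
    finally show ?thesis .
  qed
  have nz: "z0 + r * E t - z0 \<noteq> 0" for t using r normE[of t] by auto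
  have "(\<lambda>w. integral (cbox 0 1) (G w)) field_differentiable at w0 within ball w0 r"
  proof (rule leibniz_rule_field_differentiable[where fx = Gx])
    fix w t assume w: "w \<in> ball w0 r" and t: "t \<in> cbox (0::real) 1"
    have inV': "(w, z0 + r * E t) \<in> V" for t
      by (rule sub) (use w r normE[of t] in \<open>auto simp: dist_norm norm_mult\<close>)
    note inV'[of t]
    then have dd: "((\<lambda>w. \<Phi> w (z0 + r * E t)) has_field_derivative deriv (\<lambda>w. \<Phi> w (z0 + r * E t)) w) (at w)"
      using h1 DERIV_deriv_iff_field_differentiable by blast
    show "((\<lambda>w. G w t) has_field_derivative Gx w t) (at w within ball w0 r)"
      unfolding G_def Gx_def
      by (rule DERIV_cmult_right[OF DERIV_cdivide[OF has_field_derivative_at_within[OF dd]]])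
  next
    fix w assume w: "w \<in> ball w0 r"
    have "continuous_on (cbox 0 1) (\<lambda>t. \<Phi> w (z0 + r * E t))"
      by (rule continuous_on_compose2[OF cont, of _ "\<lambda>t. (w, z0 + r * E t)", simplified])
         (use w r normE in \<open>auto intro!: continuous_intros cE sub simp: dist_norm norm_mult\<close>)
    then have "continuous_on (cbox 0 1) (G w)"
      unfolding G_def using nz by (intro continuous_intros cE) auto
    then show "G w integrable_on cbox 0 1" by (rule integrable_continuous)
  next
    have "continuous_on (ball w0 r \<times> cbox 0 1) (\<lambda>y. (\<lambda>x. deriv (\<lambda>w. \<Phi> w (snd x)) (fst x)) ((\<lambda>(w,t). (w, z0 + r * E t)) y))"
    proof (rule continuous_on_compose2[OF Dc])
      show "continuous_on (ball w0 r \<times> cbox 0 1) (\<lambda>(w, t). (w, z0 + complex_of_real r * E t))"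
        unfolding case_prod_beta by (intro continuous_intros cE)
      show "(\<lambda>(w, t). (w, z0 + complex_of_real r * E t)) ` (ball w0 r \<times> cbox 0 1) \<subseteq> ball w0 r \<times> cball z0 (2 * r)"
        using normE r by (auto simp: dist_norm norm_mult)
    qed
    then have "continuous_on (ball w0 r \<times> cbox 0 1) (\<lambda>(w,t). deriv (\<lambda>w. \<Phi> w (z0 + r * E t)) w)"
      by (simp add: case_prod_beta)
    then show "continuous_on (ball w0 r \<times> cbox 0 1) (\<lambda>(w, t). Gx w t)"
      unfolding Gx_def case_prod_beta using nz
      by (intro continuous_intros cE) (auto simp: case_prod_beta)
  qed (use r in auto)
  then have "(\<lambda>w. integral (cbox 0 1) (G w)) field_differentiable at w0"
    using r by (metis at_within_open centre_in_ball open_ball)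
  then have "(\<lambda>w. 1 / (complex_of_real (2 * pi) * \<i>) * integral (cbox 0 1) (G w)) field_differentiable at w0"
    by (intro field_differentiable_mult field_differentiable_const)
  then show ?thesis
    by (rule field_differentiable_transform_within[OF r UNIV_I, rotated])
       (use eq in \<open>auto simp: dist_commute\<close>)
qed

lemma cscale_linear: "bounded_linear (\<lambda>h. cscale h d)"
proof -
  have "linear (\<lambda>h. cscale h d)"
  proof (rule linearI)
    show "cscale (x + y) d = cscale x d + cscale y d" for x y
      by (simp add: cscale_def vec_eq_iff algebra_simps)
    show "cscale (r *\<^sub>R x) d = r *\<^sub>R cscale x d" for r x
      by (simp add: cscale_def vec_eq_iff mult_scaleR_left)
  qed
  then show ?thesis by (simp add: linear_conv_bounded_linear)
qed

lemma cholo_line: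
  fixes f :: "complex \<times> (complex^'n) \<Rightarrow> complex"
  assumes "(f has_derivative L) (at (z + cscale h0 d))" "\<forall>c w. L (cscale c w) = c * L w"
  shows "((\<lambda>h. f (z + cscale h d)) has_field_derivative L d) (at h0)"
proof -
  have g: "((\<lambda>h. z + cscale h d) has_derivative (\<lambda>h. cscale h d)) (at h0)"
    using has_derivative_add[OF has_derivative_const[of z] bounded_linear_imp_has_derivative[OF cscale_linear]] by simp
  have "((f \<circ> (\<lambda>h. z + cscale h d)) has_derivative (L \<circ> (\<lambda>h. cscale h d))) (at h0)"
    by (rule diff_chain_at[OF g]) (use assms(1) in simp)
  moreover have "L \<circ> (\<lambda>h. cscale h d) = (*) (L d)"
    using assms(2) by (auto simp: fun_eq_iff mult.commute simp del: split_paired_All)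
  ultimately show ?thesis by (simp add: has_field_derivative_def o_def)
qed

lemma cholo_at:
  assumes "cholo_on U f" "z \<in> U"
  obtains L where "(f has_derivative L) (at z)" "\<forall>c w. L (cscale c w) = c * L w"
  using assms unfolding cholo_on_def by blast

lemma sum_cscale_axis: "(\<Sum>j\<in>UNIV. cscale (q $ j) (0, axis j 1)) = ((0::complex), q::complex^'n)"
proof -
  have "(\<Sum>j\<in>UNIV. cscale (q $ j) (0, axis j 1)) = (\<Sum>j\<in>UNIV. ((0::complex), (q $ j) *s axis j (1::complex)))"
    by (simp add: cscale_def)
  also have "\<dots> = (0, \<Sum>j\<in>UNIV. (q $ j) *s axis j 1)"
    by (simp add: prod_eq_iff fst_sum snd_sum)
  also have "\<dots> = (0, q)" by (simp add: basis_expansion)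
  finally show ?thesis .
qed

lemma cholo_facts:
  fixes a :: "complex \<Rightarrow> complex^'n \<Rightarrow> complex"
  assumes hol: "cholo_on U (\<lambda>z. a (fst z) (snd z))" and wq: "(w, q) \<in> U"
  shows "isCont (\<lambda>z. a (fst z) (snd z)) (w, q)"
    and "((\<lambda>h. a h q) has_field_derivative ds a w q) (at w)"
    and "\<And>d. ((\<lambda>h. a w (q + h *s d)) has_field_derivative bdot (gradp a w q) d) (at 0)"
proof -
  obtain L where L: "((\<lambda>z. a (fst z) (snd z)) has_derivative L) (at (w,q))" "\<forall>c w. L (cscale c w) = c * L w"
    using cholo_at[OF hol wq] by blast
  show "isCont (\<lambda>z. a (fst z) (snd z)) (w, q)"
    using L(1) has_derivative_continuous by blast
  have lin: "linear L" using has_derivative_bounded_linear[OF L(1)] bounded_linear.linear by blast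
  have d1: "((\<lambda>h. a h q) has_field_derivative L (1,0)) (at w)"
  proof -
    have "((\<lambda>h. (\<lambda>z. a (fst z) (snd z)) ((0,q) + cscale h (1,0))) has_field_derivative L (1,0)) (at w)"
      by (rule cholo_line) (use L in \<open>auto simp: cscale_def\<close>)
    then show ?thesis by (simp add: cscale_def)
  qed
  then show "((\<lambda>h. a h q) has_field_derivative ds a w q) (at w)"
    unfolding ds_def using DERIV_imp_deriv by metis
  have gj: "gradp a w q $ j = L (0, axis j 1)" for j
  proof -
    define z where "z = (w, \<chi> k. if k = j then 0 else q $ k)"
    have "((\<lambda>h. (\<lambda>z. a (fst z) (snd z)) (z + cscale h (0, axis j 1))) has_field_derivative L (0, axis j 1)) (at (q $ j))"
    proof (rule cholo_line)
      have "z + cscale (q $ j) (0, axis j 1) = (w, q)"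
        by (auto simp: z_def cscale_def vec_eq_iff axis_def)
      then show "((\<lambda>z. a (fst z) (snd z)) has_derivative L) (at (z + cscale (q $ j) (0, axis j 1)))"
        using L by simp
    qed (use L in auto)
    moreover have "(\<lambda>h. (\<lambda>z. a (fst z) (snd z)) (z + cscale h (0, axis j 1))) = (\<lambda>h. a w (\<chi> k. if k = j then h else q $ k))"
    proof -
      have veq: "(\<chi> k. if k = j then 0 else q $ k) + h *s axis j 1 = (\<chi> k. if k = j then h else q $ k)" for h
        by (simp add: vec_eq_iff axis_def)
      show ?thesis by (simp add: z_def cscale_def veq)
    qed
    ultimately show ?thesis
      unfolding gradp_def using DERIV_imp_deriv by fastforce
  qed
  fix d :: "complex^'n"
  have "((\<lambda>h. (\<lambda>z. a (fst z) (snd z)) ((w,q) + cscale h (0, d))) has_field_derivative L (0,d)) (at 0)"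
    by (rule cholo_line) (use L in \<open>auto simp: cscale_def\<close>)
  moreover have "L (0, d) = bdot (gradp a w q) d"
  proof -
    have "L (0,d) = L (\<Sum>j\<in>UNIV. cscale (d $ j) (0, axis j 1))" by (simp add: sum_cscale_axis)
    also have "\<dots> = (\<Sum>j\<in>UNIV. d $ j * L (0, axis j 1))"
      using L(2) by (simp add: linear_sum[OF lin])
    also have "\<dots> = bdot (gradp a w q) d" by (simp add: bdot_def gj mult.commute)
    finally show ?thesis .
  qed
  ultimately show "((\<lambda>h. a w (q + h *s d)) has_field_derivative bdot (gradp a w q) d) (at 0)"
    by (simp add: cscale_def)
qed

lemma Phi_deriv:
  fixes a :: "complex \<Rightarrow> complex^'n \<Rightarrow> complex"
  assumes hol: "cholo_on U (\<lambda>z. a (fst z) (snd z))" and wq: "(w, h *s p) \<in> U"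
  shows "((\<lambda>t. a w (t *s p)) has_field_derivative bdot (gradp a w (h *s p)) p) (at h)"
proof -
  have "((\<lambda>t. a w (h *s p + t *s p)) has_field_derivative bdot (gradp a w (h *s p)) p) (at 0)"
    by (rule cholo_facts(3)[OF hol wq])
  moreover have "(\<lambda>t. a w (h *s p + t *s p)) = (\<lambda>t. a w ((t + h) *s p))"
    by (simp add: fun_eq_iff vec_eq_iff algebra_simps)
  ultimately show ?thesis using DERIV_shift[of "\<lambda>t. a w (t *s p)" _ 0 h] by simp
qed

lemma K_diff:
  fixes a :: "complex \<Rightarrow> complex^'n \<Rightarrow> complex"
  assumes hol: "cholo_on U (\<lambda>z. a (fst z) (snd z))" and wp: "(w0, p) \<in> U"
  shows "(\<lambda>w. a w p + bdot (gradp a w p) p + ds a w p * (w - c)) field_differentiable at w0"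
proof -
  have U: "open U" using hol by (simp add: cholo_on_def)
  define W where "W = (\<lambda>w. (w, p)) -` U"
  have W: "open W" unfolding W_def
    by (rule continuous_open_vimage[OF U]) (intro continuous_intros)
  have w0: "w0 \<in> W" using wp by (simp add: W_def)
  have fa: "(\<lambda>w. a w p) field_differentiable at w" if "w \<in> W" for w
    using cholo_facts(2)[OF hol, of w p] that by (auto simp: W_def field_differentiable_def)
  have holW: "(\<lambda>w. a w p) holomorphic_on W"
    using fa by (meson field_differentiable_at_within holomorphic_on_def)
  have "deriv (\<lambda>w. a w p) holomorphic_on W" by (rule holomorphic_deriv[OF holW W])
  then have fds: "(\<lambda>w. ds a w p) field_differentiable at w0"
    unfolding ds_def using holomorphic_on_imp_differentiable_at[OF _ W w0] by simp
  define \<Phi> where "\<Phi> = (\<lambda>w (h::complex). a w (h *s p))"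
  have cs: "isCont (\<lambda>x::complex\<times>complex. snd x *s p) x" for x
  proof -
    have "continuous_on UNIV (\<lambda>x::complex\<times>complex. snd x *s p)"
      unfolding vector_scalar_mult_def by (intro continuous_intros)
    then show ?thesis using continuous_on_eq_continuous_at[OF open_UNIV] by blast
  qed
  define V where "V = (\<lambda>z::complex\<times>complex. (fst z, snd z *s p)) -` U"
  have V: "open V" unfolding V_def
    by (rule continuous_open_vimage[OF U]) (intro continuous_intros cs)
  have "(\<lambda>w. deriv (\<Phi> w) 1) field_differentiable at w0"
  proof (rule mixed_deriv[OF V])
    show "continuous_on V (\<lambda>z. \<Phi> (fst z) (snd z))"
    proof (rule continuous_at_imp_continuous_on, rule ballI)
      fix z assume "z \<in> V"
      then have zU: "(fst z, snd z *s p) \<in> U" by (simp add: V_def)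
      have "isCont (\<lambda>y. (\<lambda>z. a (fst z) (snd z)) ((\<lambda>z. (fst z, snd z *s p)) y)) z"
        by (rule isCont_o2[where f="\<lambda>z. (fst z, snd z *s p)", OF _ cholo_facts(1)[OF hol zU]]) (intro continuous_intros cs)
      then show "isCont (\<lambda>z. \<Phi> (fst z) (snd z)) z" by (simp add: \<Phi>_def)
    qed
    show "(\<lambda>w. \<Phi> w h) field_differentiable at w" if "(w, h) \<in> V" for w h
      using cholo_facts(2)[OF hol, of w "h *s p"] that
      by (auto simp: V_def \<Phi>_def field_differentiable_def)
    show "\<Phi> w field_differentiable at h" if "(w, h) \<in> V" for w h
      using Phi_deriv[OF hol, of w h p] that
      by (auto simp: V_def \<Phi>_def field_differentiable_def)
    show "(w0, 1) \<in> V" using wp by (simp add: V_def)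
  qed
  moreover have "deriv (\<Phi> w) 1 = bdot (gradp a w p) p" if "w \<in> W" for w
  proof -
    have "(w, 1 *s p) \<in> U" using that by (simp add: W_def)
    from Phi_deriv[OF hol this] show ?thesis
      unfolding \<Phi>_def using DERIV_imp_deriv by fastforce
  qed
  ultimately have fgr: "(\<lambda>w. bdot (gradp a w p) p) field_differentiable at w0"
  proof -
    assume f: "(\<lambda>w. deriv (\<Phi> w) 1) field_differentiable at w0"
      and e: "\<And>w. w \<in> W \<Longrightarrow> deriv (\<Phi> w) 1 = bdot (gradp a w p) p"
    obtain d where d: "d > 0" "ball w0 d \<subseteq> W" using W w0 open_contains_ball by blast
    show ?thesis
      by (rule field_differentiable_transform_within[OF d(1) UNIV_I _ f])
         (use d e in \<open>auto simp: dist_commute subset_iff\<close>)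
  qed
  have "(\<lambda>w. a w p + bdot (gradp a w p) p) field_differentiable at w0"
    by (rule field_differentiable_add[OF fa[OF w0] fgr])
  moreover have "(\<lambda>w. ds a w p * (w - c)) field_differentiable at w0"
    by (rule field_differentiable_mult[OF fds field_differentiable_diff[OF field_differentiable_ident field_differentiable_const]])
  ultimately show ?thesis by (rule field_differentiable_add)
qed

lemma line_vd: "((\<lambda>t::real. c + of_real t * \<beta>) has_vector_derivative (\<beta>::complex)) (at 0)"
proof -
  have "((\<lambda>t::real. c + t *\<^sub>R \<beta>) has_vector_derivative \<beta>) (at 0)"
    by (auto intro!: derivative_eq_intros)
  then show ?thesis by (simp add: scaleR_conv_of_real)
qed

lemma pd_compose:
  fixes f :: "real^'n \<Rightarrow> complex"
  assumes eq: "\<And>t. f (x + t *\<^sub>R axis j 1) = K (c + of_real t * \<beta>)"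
    and dK: "(K has_field_derivative K') (at c)"
  shows "has_pd f j x" "pd f j x = \<beta> * K'"
proof -
  have "((K \<circ> (\<lambda>t::real. c + of_real t * \<beta>)) has_vector_derivative (\<beta> * K')) (at 0)"
    by (rule field_vector_diff_chain_at[OF line_vd]) (simp add: dK)
  moreover have "(\<lambda>t. f (x + t *\<^sub>R axis j 1)) = K \<circ> (\<lambda>t::real. c + of_real t * \<beta>)"
    by (simp add: fun_eq_iff eq)
  ultimately have D: "((\<lambda>t. f (x + t *\<^sub>R axis j 1)) has_vector_derivative (\<beta> * K')) (at 0)" by simp
  then show "has_pd f j x" unfolding has_pd_def using differentiableI_vector by blast
  show "pd f j x = \<beta> * K'" unfolding pd_def using D vector_derivative_at by blast
qed

lemma norm_cvec_scale: "norm (c *s (p::complex^'n)) = cmod c * norm p"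
  unfolding norm_vec_def by (simp add: norm_mult L2_set_right_distrib)

lemma bdot_scale_right: "bdot q (c *s p) = c * bdot q p"
  by (simp add: bdot_def sum_distrib_left algebra_simps)

lemma bdot_scale_left: "bdot (c *s q) p = c * bdot q p"
  by (simp add: bdot_def sum_distrib_left algebra_simps)

lemma bdot_line: "bdot (vreal (x + t *\<^sub>R axis j 1)) p = bdot (vreal x) p + of_real t * p $ j"
proof -
  have "bdot (vreal (x + t *\<^sub>R axis j 1)) p = (\<Sum>k\<in>UNIV. of_real (x $ k) * p $ k + (if k = j then of_real t * p $ j else 0))"
    unfolding bdot_def by (intro sum.cong) (auto simp: vreal_def axis_def algebra_simps)
  also have "\<dots> = bdot (vreal x) p + of_real t * p $ j"
    by (simp add: sum.distrib bdot_def vreal_def)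
  finally show ?thesis .
qed

lemma bdot_add_left: "bdot (x + y) q = bdot x q + bdot y q"
  by (simp add: bdot_def sum.distrib algebra_simps)

lemma bdot_vreal_0 [simp]: "bdot (vreal 0) p = 0"
  by (simp add: bdot_def vreal_def)

lemma bdot_bound: "cmod (bdot (vreal y) p) \<le> real CARD('n) * (norm (y::real^'n) * norm p)"
proof -
  have "cmod (bdot (vreal y) p) \<le> (\<Sum>k\<in>(UNIV::'n set). cmod (of_real (y $ k) * p $ k))"
    unfolding bdot_def vreal_def by (simp add: norm_sum)
  also have "\<dots> \<le> (\<Sum>k\<in>(UNIV::'n set). norm y * norm p)"
  proof (rule sum_mono)
    fix k
    have "cmod (of_real (y $ k) * p $ k) = \<bar>y $ k\<bar> * cmod (p $ k)" by (simp add: norm_mult)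
    also have "\<dots> \<le> norm y * norm p"
      using component_le_norm_cart[where x=y and i=k] Finite_Cartesian_Product.norm_nth_le[where x=p and i=k] by (intro mult_mono) auto
    finally show "cmod (of_real (y $ k) * p $ k) \<le> norm y * norm p" .
  qed
  also have "\<dots> = real CARD('n) * (norm y * norm p)" by simp
  finally show ?thesis .
qed

lemma v_pd:
  shows "pd (\<lambda>y. bdot (vreal y) p) j x = p $ j" "has_pd (\<lambda>y. bdot (vreal y) p) j x"
proof -
  have eq: "\<And>t. bdot (vreal (x + t *\<^sub>R axis j 1)) p = (\<lambda>z. z) (bdot (vreal x) p + of_real t * p $ j)"
    by (simp add: bdot_line)
  show "pd (\<lambda>y. bdot (vreal y) p) j x = p $ j"
    using pd_compose(2)[OF eq DERIV_ident] by simp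
  show "has_pd (\<lambda>y. bdot (vreal y) p) j x"
    using pd_compose(1)[OF eq DERIV_ident] by simp
qed

lemma const_pd:
  shows "pd (\<lambda>y::real^'n. c::complex) i x = 0" "has_pd (\<lambda>y::real^'n. c::complex) i x"
proof -
  have eq: "\<And>t. (\<lambda>y::real^'n. c) (x + t *\<^sub>R axis i 1) = (\<lambda>z. z) (c + of_real t * 0)"
    by simp
  show "pd (\<lambda>y::real^'n. c::complex) i x = 0"
    using pd_compose(2)[OF eq DERIV_ident] by simp
  show "has_pd (\<lambda>y::real^'n. c::complex) i x"
    by (rule pd_compose(1)[OF eq DERIV_ident])
qed

lemma v_pd_fun: "pd (\<lambda>y. bdot (vreal y) p) j = (\<lambda>_. p $ j)"
  by (simp add: fun_eq_iff v_pd)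

lemma v_C2a: "C2a S \<alpha> (\<lambda>y::real^'n. bdot (vreal y) p)"
  unfolding C2a_def
proof (intro conjI allI ballI)
  show "continuous_on (closure S) (\<lambda>y. bdot (vreal y) p)"
    unfolding bdot_def vreal_def by (simp, intro continuous_intros)
  show "has_pd (\<lambda>y. bdot (vreal y) p) j x" for j x by (rule v_pd(2))
  show "has_pd (pd (\<lambda>y. bdot (vreal y) p) j) i x" for i j x
    unfolding v_pd_fun by (rule const_pd(2))
  show "uniformly_continuous_on S (pd (\<lambda>y. bdot (vreal y) p) j)" for j
    unfolding v_pd_fun by (rule uniformly_continuous_on_const)
  show "holder_on \<alpha> S (pd (pd (\<lambda>y. bdot (vreal y) p) j) i)" for i j
    unfolding v_pd_fun holder_on_def const_pd(1) by (intro exI[of _ 0]) simp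
qed

lemma v_solves:
  fixes a :: "complex \<Rightarrow> complex^'n \<Rightarrow> complex"
  assumes hol: "cholo_on U (\<lambda>z. a (fst z) (snd z))" and pp: "bdot p p = 0"
    and inU: "\<And>y. y \<in> S \<Longrightarrow> (u_sp s p y, p) \<in> U"
  shows "solves S \<alpha> a s p (\<lambda>y. bdot (vreal y) p) (\<lambda>y. bdot (vreal y) p)"
  unfolding solves_def
proof (intro conjI ballI v_C2a refl)
  fix x assume x: "x \<in> S"
  define K where "K = (\<lambda>w. a w p + bdot (gradp a w p) p + ds a w p * (w - s))"
  have gc: "gradc (\<lambda>y. bdot (vreal y) p) y = p" for y
    by (simp add: gradc_def v_pd vec_eq_iff)
  have F: "flux a s p y (bdot (vreal y) p) (gradc (\<lambda>y. bdot (vreal y) p) y) $ j = K (u_sp s p y) * p $ j" for y j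
    by (simp add: gc flux_def K_def u_sp_def algebra_simps)
  have "K field_differentiable at (u_sp s p x)"
    unfolding K_def by (rule K_diff[OF hol inU[OF x]])
  then obtain K' where K': "(K has_field_derivative K') (at (u_sp s p x))"
    by (auto simp: field_differentiable_def)
  have KK: "((\<lambda>z. K z * p $ j) has_field_derivative K' * p $ j) (at (u_sp s p x))" for j
    by (rule DERIV_cmult_right[OF K'])
  have eq: "\<And>t. flux a s p (x + t *\<^sub>R axis j 1) (bdot (vreal (x + t *\<^sub>R axis j 1)) p)
                 (gradc (\<lambda>y. bdot (vreal y) p) (x + t *\<^sub>R axis j 1)) $ j
             = (\<lambda>z. K z * p $ j) (u_sp s p x + of_real t * p $ j)" for j
    by (simp only: F) (simp add: u_sp_def bdot_line algebra_simps)
  have hp: "has_pd (\<lambda>y. flux a s p y (bdot (vreal y) p) (gradc (\<lambda>y. bdot (vreal y) p) y) $ j) j x" for j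
    by (rule pd_compose(1)[OF eq KK])
  have pv: "pd (\<lambda>y. flux a s p y (bdot (vreal y) p) (gradc (\<lambda>y. bdot (vreal y) p) y) $ j) j x = K' * (p $ j * p $ j)" for j
    using pd_compose(2)[OF eq KK, of j] by (simp add: algebra_simps)
  show "div_zero (\<lambda>y. flux a s p y (bdot (vreal y) p) (gradc (\<lambda>y. bdot (vreal y) p) y)) x"
    unfolding div_zero_def
  proof (intro conjI allI hp)
    have "(\<Sum>j\<in>UNIV. K' * (p $ j * p $ j)) = K' * bdot p p"
      by (simp add: bdot_def sum_distrib_left)
    then show "(\<Sum>j\<in>UNIV. pd (\<lambda>y. flux a s p y (bdot (vreal y) p) (gradc (\<lambda>y. bdot (vreal y) p) y) $ j) j x) = 0"
      by (simp add: pv pp)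
  qed
qed

lemma DN_value:
  fixes a :: "complex \<Rightarrow> complex^'n \<Rightarrow> complex"
  assumes nt: "\<not> trivial_limit (at (0::real^'n) within S)"
  shows "lin_DN S \<alpha> a s p (\<lambda>y. bdot (vreal y) p) 0 =
           (a s p + bdot (gradp a s p) p) * bdot p (vreal (outer_normal S \<alpha> 0))"
proof -
  have gb: "gradb S (\<lambda>y. bdot (vreal y) p) 0 = p"
    unfolding gradb_def v_pd_fun
    by (simp add: vec_eq_iff tendsto_Lim[OF nt tendsto_const])
  show ?thesis
    unfolding lin_DN_def gb
    by (simp add: flux_def u_sp_def bdot_scale_left bdot_add_left algebra_simps)
qed

lemma scaling_step:
  fixes a1 a2 :: "complex \<Rightarrow> complex^'n \<Rightarrow> complex" and s :: complex
  assumes hol1: "cholo_on U1 (\<lambda>z. a1 (fst z) (snd z))" and hol2: "cholo_on U2 (\<lambda>z. a2 (fst z) (snd z))"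
    and inU: "\<And>q. norm q < r0 \<Longrightarrow> (s, q) \<in> U1 \<and> (s, q) \<in> U2"
    and dl: "0 < \<delta>" "\<delta> \<le> r0"
    and EA: "\<And>q. bdot q q = 0 \<Longrightarrow> norm q < \<delta> \<Longrightarrow> bdot q nu \<noteq> 0 \<Longrightarrow>
               a1 s q + bdot (gradp a1 s q) q = a2 s q + bdot (gradp a2 s q) q"
    and p: "bdot p p = 0" "norm p < r0" "bdot p nu \<noteq> 0"
  shows "a1 s p = a2 s p"
proof -
  have "p \<noteq> 0" using p(3) by (auto simp: bdot_def)
  define N where "N = norm p"
  have N: "N > 0" "N < r0" using \<open>p \<noteq> 0\<close> p(2) by (auto simp: N_def)
  define D where "D = ball (0::complex) (r0 / N)"
  have inD: "(s, l *s p) \<in> U1 \<and> (s, l *s p) \<in> U2" if "l \<in> D" for l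
  proof (rule inU)
    have "cmod l < r0 / N" using that by (simp add: D_def)
    then have "cmod l * N < r0" using N by (simp add: field_simps)
    then show "norm (l *s p) < r0" by (simp add: norm_cvec_scale N_def)
  qed
  have d1: "((\<lambda>l. a1 s (l *s p)) has_field_derivative bdot (gradp a1 s (l *s p)) p) (at l)" if "l \<in> D" for l
    using Phi_deriv[OF hol1] inD[OF that] by blast
  have d2: "((\<lambda>l. a2 s (l *s p)) has_field_derivative bdot (gradp a2 s (l *s p)) p) (at l)" if "l \<in> D" for l
    using Phi_deriv[OF hol2] inD[OF that] by blast
  have h1: "(\<lambda>l. a1 s (l *s p)) holomorphic_on D"
    using d1 by (meson field_differentiable_at_within field_differentiable_def holomorphic_on_def)
  have h2: "(\<lambda>l. a2 s (l *s p)) holomorphic_on D"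
    using d2 by (meson field_differentiable_at_within field_differentiable_def holomorphic_on_def)
  define g where "g = (\<lambda>l. l * (a1 s (l *s p) - a2 s (l *s p)))"
  have dg: "(g has_field_derivative
      (a1 s (l *s p) + bdot (gradp a1 s (l *s p)) (l *s p)) - (a2 s (l *s p) + bdot (gradp a2 s (l *s p)) (l *s p))) (at l)"
    if "l \<in> D" for l
  proof -
    have "(g has_field_derivative l * (bdot (gradp a1 s (l *s p)) p - bdot (gradp a2 s (l *s p)) p) + 1 * (a1 s (l *s p) - a2 s (l *s p))) (at l)"
      unfolding g_def by (rule DERIV_mult'[OF DERIV_ident DERIV_diff[OF d1[OF that] d2[OF that]]])
    then show ?thesis by (simp add: bdot_scale_right algebra_simps)
  qed
  define \<delta>' where "\<delta>' = \<delta> / N"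
  have dlt: "\<delta>' \<le> r0 / N" using dl N by (simp add: \<delta>'_def divide_right_mono)
  have sub: "ball 0 \<delta>' \<subseteq> D" using dlt by (auto simp: D_def)
  have "\<delta>' > 0" using dl N by (simp add: \<delta>'_def)
  obtain c where c: "\<And>l. l \<in> ball 0 \<delta>' \<Longrightarrow> g l = c"
  proof (rule DERIV_zero_connected_constant[of "ball 0 \<delta>'" "{0}" g])
    show "continuous_on (ball 0 \<delta>') g"
    proof (rule continuous_at_imp_continuous_on, rule ballI)
      fix l :: complex assume "l \<in> ball 0 \<delta>'"
      then have "l \<in> D" using sub by blast
      from DERIV_continuous[OF dg[OF this]] show "isCont g l" .
    qed
    show "\<forall>x\<in>ball 0 \<delta>' - {0}. (g has_field_derivative 0) (at x)"
    proof
      fix l :: complex assume l: "l \<in> ball 0 \<delta>' - {0}"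
      have "bdot (l *s p) (l *s p) = 0" by (simp add: bdot_scale_left bdot_scale_right p(1))
      moreover have "norm (l *s p) < \<delta>"
      proof -
        have "cmod l < \<delta> / N" using l by (simp add: \<delta>'_def)
        then show ?thesis using N by (simp add: norm_cvec_scale N_def field_simps)
      qed
      moreover have "bdot (l *s p) nu \<noteq> 0" using l p(3) by (simp add: bdot_scale_left)
      ultimately have eqE: "a1 s (l *s p) + bdot (gradp a1 s (l *s p)) (l *s p) = a2 s (l *s p) + bdot (gradp a2 s (l *s p)) (l *s p)"
        by (rule EA)
      have "l \<in> D" using l sub by blast
      from dg[OF this] show "(g has_field_derivative 0) (at l)" by (simp only: eqE diff_self)
    qed
  qed auto
  have "g 0 = 0" by (simp add: g_def)
  then have c0: "c = 0" using c[of 0] \<open>\<delta>' > 0\<close> by simp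
  have eqs: "a1 s (l *s p) = a2 s (l *s p)" if "l \<in> ball 0 \<delta>' - {0}" for l
    using c[of l] c0 that by (simp add: g_def)
  have "a1 s (1 *s p) = a2 s (1 *s p)"
  proof (rule analytic_continuation_open[of "ball 0 \<delta>' - {0}" D _ _ 1])
    show "ball (0::complex) \<delta>' - {0} \<noteq> {}"
    proof -
      have "of_real (\<delta>'/2) \<in> ball (0::complex) \<delta>' - {0}" using \<open>\<delta>' > 0\<close> by auto
      then show ?thesis by (metis empty_iff)
    qed
    show "1 \<in> D" using N by (simp add: D_def)
    show "open (ball 0 \<delta>' - {0})" by (simp add: open_delete)
    show "open D" "connected D" by (simp_all add: D_def)
    show "ball 0 \<delta>' - {0} \<subseteq> D" using sub by blast
    show "(\<lambda>l. a1 s (l *s p)) holomorphic_on D" by (rule h1)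
    show "(\<lambda>l. a2 s (l *s p)) holomorphic_on D" by (rule h2)
    show "a1 s (z *s p) = a2 s (z *s p)" if "z \<in> ball 0 \<delta>' - {0}" for z by (rule eqs[OF that])
  qed
  then show ?thesis by simp
qed

theorem theorem6p4:
  fixes \<Omega> :: "(real^'n) set"
    and \<alpha> r0 R0 :: real
    and a1 a2 :: "complex \<Rightarrow> complex^'n \<Rightarrow> complex"
  assumes n2: "CARD('n) \<ge> 2"
    and alpha: "0 < \<alpha>" "\<alpha> < 1"
    and dom: "C2a_domain \<Omega> \<alpha>"
    and zero_bd: "0 \<in> frontier \<Omega>"
    and r0: "0 < r0" and R0: "0 < R0"
    and H1: "H123 r0 R0 a1" and H2: "H123 r0 R0 a2"
    and solv: "\<And>a s p h. a \<in> {a1, a2} \<Longrightarrow> bdot p p = 0 \<Longrightarrow> norm p < r0 \<Longrightarrow>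
                 C2a \<Omega> \<alpha> h \<Longrightarrow>
                 \<exists>v. solves \<Omega> \<alpha> a (complex_of_real s) p h v \<and>
                     (\<forall>w. solves \<Omega> \<alpha> a (complex_of_real s) p h w \<longrightarrow> (\<forall>x\<in>closure \<Omega>. w x = v x))"
    and DN: "\<And>s p h v1 v2. bdot p p = 0 \<Longrightarrow> norm p < r0 \<Longrightarrow> C2a \<Omega> \<alpha> h \<Longrightarrow>
                 solves \<Omega> \<alpha> a1 (complex_of_real s) p h v1 \<Longrightarrow>
                 solves \<Omega> \<alpha> a2 (complex_of_real s) p h v2 \<Longrightarrow>
                 \<forall>x\<in>frontier \<Omega>. lin_DN \<Omega> \<alpha> a1 (complex_of_real s) p v1 x
                                = lin_DN \<Omega> \<alpha> a2 (complex_of_real s) p v2 x"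
  shows "\<forall>s\<in>strip R0. \<forall>p\<in>cone \<Omega> \<alpha> r0. a1 s p = a2 s p"
proof -
  obtain U1 where U1: "strip R0 \<times> ball 0 r0 \<subseteq> U1" "cholo_on U1 (\<lambda>z. a1 (fst z) (snd z))"
    using H1 unfolding H123_def by blast
  obtain U2 where U2: "strip R0 \<times> ball 0 r0 \<subseteq> U2" "cholo_on U2 (\<lambda>z. a2 (fst z) (snd z))"
    using H2 unfolding H123_def by blast
  have opn: "open \<Omega>" and bdd: "bounded \<Omega>" using dom by (auto simp: C2a_domain_def)
  obtain B where B: "B > 0" "\<And>y. y \<in> \<Omega> \<Longrightarrow> norm y \<le> B" using bdd bounded_pos by metis
  define nu where "nu = vreal (outer_normal \<Omega> \<alpha> 0)"
  define \<delta> where "\<delta> = min r0 (R0 / (real CARD('n) * B))"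
  have cpos: "real CARD('n) > 0" by simp
  have dpos: "\<delta> > 0" "\<delta> \<le> r0" using r0 R0 B cpos by (auto simp: \<delta>_def)
  have nt: "\<not> trivial_limit (at 0 within \<Omega>)"
  proof -
    have "0 \<in> closure \<Omega>" "0 \<notin> \<Omega>" using zero_bd opn by (auto simp: frontier_def interior_open)
    then have "0 islimpt \<Omega>" by (auto simp: closure_def)
    then show ?thesis by (simp add: trivial_limit_within)
  qed
  have strip_real: "complex_of_real s \<in> strip R0" for s using R0 by (simp add: strip_def)
  have EA: "a1 (of_real s) q + bdot (gradp a1 (of_real s) q) q = a2 (of_real s) q + bdot (gradp a2 (of_real s) q) q"
    if q: "bdot q q = 0" "norm q < \<delta>" "bdot q nu \<noteq> 0" for s :: real and q
  proof -
    have qr0: "norm q < r0" using q(2) dpos by simp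
    have inSB: "(u_sp (of_real s) q y, q) \<in> strip R0 \<times> ball 0 r0" if y: "y \<in> \<Omega>" for y
    proof -
      have "cmod (bdot (vreal y) q) \<le> real CARD('n) * (norm y * norm q)" by (rule bdot_bound)
      also have "\<dots> \<le> real CARD('n) * (B * \<delta>)"
        using B(1) B(2)[OF y] q(2) cpos by (intro mult_left_mono mult_mono) auto
      also have "\<dots> \<le> R0"
      proof -
        have "\<delta> \<le> R0 / (real CARD('n) * B)" by (simp add: \<delta>_def)
        then have "real CARD('n) * B * \<delta> \<le> real CARD('n) * B * (R0 / (real CARD('n) * B))"
          using cpos B(1) by (intro mult_left_mono) auto
        also have "\<dots> = R0" using cpos B(1) by simp
        finally show ?thesis by (simp add: mult.assoc)
      qed
      finally have "cmod (bdot (vreal y) q) \<le> R0" .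
      then have "\<bar>Im (u_sp (of_real s) q y)\<bar> \<le> R0"
        using abs_Im_le_cmod[of "bdot (vreal y) q"] by (simp add: u_sp_def)
      then show ?thesis using qr0 by (simp add: strip_def)
    qed
    have sol1: "solves \<Omega> \<alpha> a1 (of_real s) q (\<lambda>y. bdot (vreal y) q) (\<lambda>y. bdot (vreal y) q)"
      by (rule v_solves[OF U1(2) q(1)]) (use inSB U1(1) in blast)
    have sol2: "solves \<Omega> \<alpha> a2 (of_real s) q (\<lambda>y. bdot (vreal y) q) (\<lambda>y. bdot (vreal y) q)"
      by (rule v_solves[OF U2(2) q(1)]) (use inSB U2(1) in blast)
    from DN[OF q(1) qr0 v_C2a sol1 sol2] zero_bd
    have "lin_DN \<Omega> \<alpha> a1 (of_real s) q (\<lambda>y. bdot (vreal y) q) 0 = lin_DN \<Omega> \<alpha> a2 (of_real s) q (\<lambda>y. bdot (vreal y) q) 0"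
      by blast
    then have "(a1 (of_real s) q + bdot (gradp a1 (of_real s) q) q) * bdot q nu
             = (a2 (of_real s) q + bdot (gradp a2 (of_real s) q) q) * bdot q nu"
      by (simp only: DN_value[OF nt] nu_def)
    then show ?thesis using q(3) by simp
  qed
  have stepB: "a1 (of_real s) p = a2 (of_real s) p" if p: "p \<in> cone \<Omega> \<alpha> r0" for s :: real and p
  proof (rule scaling_step[OF U1(2) U2(2) _ dpos EA[where s=s]])
    fix q :: "complex^'n" assume "norm q < r0"
    then show "(of_real s, q) \<in> U1 \<and> (of_real s, q) \<in> U2"
      using U1(1) U2(1) strip_real[of s] by (auto simp: subset_iff)
  next
    show "bdot p p = 0" "norm p < r0" "bdot p nu \<noteq> 0" using p by (auto simp: cone_def nu_def)
  qed auto
  have U1o: "open U1" and U2o: "open U2" using U1(2) U2(2) by (auto simp: cholo_on_def)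
  show ?thesis
  proof (intro ballI)
    fix w p assume w: "w \<in> strip R0" and p: "p \<in> cone \<Omega> \<alpha> r0"
    have pb: "p \<in> ball 0 r0" using p by (simp add: cone_def)
    define W where "W = (\<lambda>w. (w, p)) -` (U1 \<inter> U2)"
    have Wo: "open W" unfolding W_def
      by (rule continuous_open_vimage) (use U1o U2o in \<open>auto intro!: continuous_intros\<close>)
    have sW: "strip R0 \<subseteq> W" using U1(1) U2(1) pb by (auto simp: W_def subset_iff)
    have "strip R0 = {x. Im x \<le> R0} \<inter> {x. Im x \<ge> -R0}" by (auto simp: strip_def)
    then have "convex (strip R0)" by (simp add: convex_Int convex_halfspace_Im_le convex_halfspace_Im_ge)
    then have cs: "connected (strip R0)" by (rule convex_connected)
    define C where "C = connected_component_set W 0"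
    have z0: "0 \<in> strip R0" using R0 by (simp add: strip_def)
    have sC: "strip R0 \<subseteq> C" using connected_component_maximal[OF z0 cs sW] by (simp add: C_def)
    have CW: "C \<subseteq> W" by (simp add: C_def connected_component_subset)
    have hol: "(\<lambda>w. a1 w p - a2 w p) holomorphic_on C"
      unfolding holomorphic_on_def
    proof
      fix x assume "x \<in> C"
      then have "(x, p) \<in> U1" "(x, p) \<in> U2" using CW by (auto simp: W_def)
      then have "(\<lambda>w. a1 w p - a2 w p) field_differentiable at x"
        using DERIV_diff[OF cholo_facts(2)[OF U1(2)] cholo_facts(2)[OF U2(2)]]
        by (auto simp: field_differentiable_def)
      then show "(\<lambda>w. a1 w p - a2 w p) field_differentiable at x within C"
        by (rule field_differentiable_at_within)
    qed
    have "(\<lambda>w. a1 w p - a2 w p) w = 0"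
    proof (rule analytic_continuation[where S=C and U="range complex_of_real" and \<xi>=0, OF hol])
      show "open C" unfolding C_def by (rule open_connected_component[OF Wo])
      show "connected C" unfolding C_def by (rule connected_connected_component)
      show "range complex_of_real \<subseteq> C" using sC strip_real by blast
      show "0 \<in> C" using sC z0 by blast
      show "w \<in> C" using sC w by blast
      show "0 islimpt range complex_of_real"
        unfolding islimpt_approachable
      proof (intro allI impI)
        fix e :: real assume "e > 0"
        then show "\<exists>x'\<in>range complex_of_real. x' \<noteq> 0 \<and> dist x' 0 < e"
          by (intro bexI[of _ "complex_of_real (e/2)"] rangeI) auto
      qed
      show "a1 z p - a2 z p = 0" if "z \<in> range complex_of_real" for z
        using that stepB[OF p] by auto
    qed
    then show "a1 w p = a2 w p" by simp
  qed
qed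

end
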